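(* Let $a>b\ge1$ be coprime positive integers and $\alpha_b,\alpha_{b+1},\dots,\alpha_a$ integers with $|\alpha_b|=1$. For each $N\in\mathbb N$ consider the equation $$m^a=\sum_{j=b}^a\alpha_jn^jN^{a-j}$$ in positive integers $m$. Then for every $\delta>0$ there exist $N_\delta$ and sets $\Gamma_{N,\delta}\subset[1,N]$ of cardinality at most $\delta N$ such that for all $N>N_\delta$ and all integers $n\in[1,N]\setminus\Gamma_{N,\delta}$ there is no positive integer $m$ satisfying this equation. *)

theory Defs
  imports Complex_Main
begin

end

theory Submission
  imports Defs "HOL-Computational_Algebra.Nth_Powers" "HOL-Computational_Algebra.Primes"
begin

lemma key:
  fixes a b n N :: nat and \<alpha> :: "nat \<Rightarrow> int" and m :: int
  assumes b1: "b \<ge> 1" and ab: "a > b" and cop: "coprime a b" and ub: "\<bar>\<alpha> b\<bar> = 1"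
    and n1: "1 \<le> n" and nN: "n \<le> N" and m0: "m > 0"
    and eq: "m ^ a = (\<Sum>j=b..a. \<alpha> j * int n ^ j * int N ^ (a - j))"
  shows "\<exists>f t. f dvd N \<and> f \<ge> 1 \<and> t \<ge> 1 \<and> t^2 \<le> f \<and> n = (N div f) * t^a"
proof -
  define g where "g = gcd n N"
  define n' where "n' = n div g"
  define N' where "N' = N div g"
  have g0: "g > 0" using n1 by (simp add: g_def)
  have nn: "n = g * n'" by (simp add: n'_def g_def)
  have NN: "N = g * N'" by (simp add: N'_def g_def)
  have copnN: "coprime n' N'" unfolding n'_def N'_def g_def using n1 by (intro div_gcd_coprime) auto
  define P where "P = (\<Sum>j=b..a. \<alpha> j * int n' ^ (j-b) * int N' ^ (a-j))"
  have sumeq: "(\<Sum>j=b..a. \<alpha> j * int n ^ j * int N ^ (a - j)) = int g ^ a * (int n' ^ b * P)"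
    unfolding P_def sum_distrib_left
  proof (rule sum.cong[OF refl])
    fix j assume j: "j \<in> {b..a}"
    have e1: "int n ^ j = int g ^ j * int n' ^ b * int n' ^ (j - b)"
      using j by (simp add: nn power_mult_distrib mult.assoc power_add[symmetric])
    have e2: "int N ^ (a-j) = int g ^ (a-j) * int N' ^ (a-j)"
      by (simp add: NN power_mult_distrib)
    have e3: "int g ^ a = int g ^ j * int g ^ (a-j)"
      using j by (simp add: power_add[symmetric])
    show "\<alpha> j * int n ^ j * int N ^ (a - j) = int g ^ a * (int n' ^ b * (\<alpha> j * int n' ^ (j - b) * int N' ^ (a - j)))"
      unfolding e1 e2 e3 by (simp add: algebra_simps)
  qed
  have a0: "a > 0" using ab by simp
  have "int g ^ a dvd m ^ a" using eq sumeq by simp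
  hence "int g dvd m" using pow_divides_pow_iff[OF a0] by blast
  then obtain m' where m': "m = int g * m'" by blast
  have "int g ^ a * m' ^ a = int g ^ a * (int n' ^ b * P)"
    using eq sumeq m' by (simp add: power_mult_distrib)
  hence meq: "m' ^ a = int n' ^ b * P" using g0 by simp
  have m'0: "m' > 0" using m0 m' g0 by (simp add: zero_less_mult_iff)
  have n'0: "n' > 0" using nn n1 by (cases "n' = 0") auto
  have P0: "P > 0"
  proof -
    have "int n' ^ b * P > 0" using meq m'0 by (metis zero_less_power)
    thus ?thesis using n'0 by (simp add: zero_less_mult_iff)
  qed
  define c where "c = \<alpha> b * int N' ^ (a-b)"
  have "int n' dvd (P - c)"
  proof -
    have split: "{b..a} = insert b {Suc b..a}" using ab by auto
    have "P = c + (\<Sum>j=Suc b..a. \<alpha> j * int n' ^ (j-b) * int N' ^ (a-j))"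
      unfolding P_def split c_def by simp
    moreover have "int n' dvd (\<Sum>j=Suc b..a. \<alpha> j * int n' ^ (j-b) * int N' ^ (a-j))"
    proof (rule dvd_sum)
      fix j assume "j \<in> {Suc b..a}"
      hence "j - b \<noteq> 0" by auto
      thus "int n' dvd \<alpha> j * int n' ^ (j-b) * int N' ^ (a-j)"
        by (simp add: dvd_power)
    qed
    ultimately show ?thesis by simp
  qed
  then obtain Q where Q: "P = c + int n' * Q" by (metis dvd_def diff_add_cancel add.commute)
  have copc: "coprime (int n') c"
  proof -
    have "is_unit (\<alpha> b)" proof -
      have "\<alpha> b = 1 \<or> \<alpha> b = -1" using ub by (auto simp: abs_if split: if_splits)
      thus ?thesis by auto
    qed
    hence "coprime (int n') (\<alpha> b)" by (rule is_unit_right_imp_coprime)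
    moreover have "coprime (int n') (int N' ^ (a-b))" using copnN by simp
    ultimately show ?thesis unfolding c_def by simp
  qed
  have copP: "coprime (int n') P"
  proof (rule coprimeI)
    fix d assume d1: "d dvd int n'" and d2: "d dvd P"
    have "d dvd int n' * Q" using d1 by simp
    hence "d dvd c" using d2 Q by (metis dvd_add_left_iff)
    thus "is_unit d" using copc d1 by (meson coprime_common_divisor)
  qed
  define p where "p = nat P"
  define M where "M = nat m'"
  have nateq: "M ^ a = n' ^ b * p"
  proof -
    have "int (M ^ a) = int (n' ^ b * p)" using meq m'0 P0 by (simp add: M_def p_def)
    thus ?thesis by (simp only: of_nat_eq_iff)
  qed
  have "coprime (int n') (int p)" using copP P0 by (simp add: p_def)
  hence "coprime n' p" by simp
  hence copp: "coprime (n' ^ b) p" by simp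
  have "is_nth_power a (n' ^ b)"
    using is_nth_power_mult_coprime_natD(1)[OF copp] nateq n'0 P0 p_def by (metis is_nth_power_nth_power zero_less_nat_eq zero_less_power)
  hence "is_nth_power a n'"
    unfolding is_nth_power_conv_multiplicity_nat[OF a0]
  proof (intro allI impI)
    fix q :: nat assume H: "\<forall>p. prime p \<longrightarrow> a dvd multiplicity p (n' ^ b)" and q: "prime q"
    have "multiplicity q (n' ^ b) = b * multiplicity q n'"
      using q n'0 by (simp add: prime_elem_multiplicity_power_distrib)
    hence "a dvd b * multiplicity q n'" using H q by metis
    thus "a dvd multiplicity q n'" using cop by (simp add: coprime_dvd_mult_right_iff)
  qed
  then obtain t where t: "n' = t ^ a" by (auto elim: is_nth_powerE)
  have t1: "t \<ge> 1" using t n'0 a0 by (cases "t = 0") auto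
  have "t ^ 2 \<le> t ^ a" using t1 ab b1 by (intro power_increasing) auto
  moreover have "n' \<le> N'" using nn NN nN g0 by simp
  ultimately have t2: "t^2 \<le> N'" using t by simp
  have N'0: "N' \<ge> 1" using t2 t1 by (metis le_trans one_le_power)
  have "N div N' = g" using NN N'0 by simp
  hence "n = (N div N') * t ^ a" using nn t by simp
  moreover have "N' dvd N" using NN by simp
  ultimately show ?thesis using N'0 t1 t2 by blast
qed

lemma telescope:
  fixes L M :: nat
  assumes "L \<ge> 1" "L \<le> M"
  shows "(\<Sum>t=Suc L..M. 1 / (real t * (real t - 1))) = 1 / real L - 1 / real M"
  using assms(2)
proof (induction M rule: dec_induct)
  case base
  then show ?case by simp
next
  case (step M)
  have M1: "real M \<ge> 1" using step assms by simp
  have "(\<Sum>t=Suc L..Suc M. 1 / (real t * (real t - 1))) =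
        (\<Sum>t=Suc L..M. 1 / (real t * (real t - 1))) + 1 / (real (Suc M) * (real (Suc M) - 1))"
    using step by simp
  also have "\<dots> = 1 / real L - 1 / real M + 1 / ((real M + 1) * real M)"
    using step by simp
  also have "\<dots> = 1 / real L - 1 / real (Suc M)"
    using M1 by (simp add: field_simps) (smt (verit) M1 mult_nonneg_nonneg)
  finally show ?case .
qed

definition S :: "nat \<Rightarrow> nat \<Rightarrow> nat set" where
  "S a N = {n\<in>{1..N}. \<exists>f t. f dvd N \<and> f \<ge> 1 \<and> t \<ge> 1 \<and> t^2 \<le> f \<and> n = (N div f) * t^a}"

lemma count:
  fixes L :: nat
  assumes L1: "L \<ge> 1"
  shows "real (card (S a N)) \<le> real L ^ 3 + 2 * real N / real L"
proof -
  define A where "A = (\<lambda>(f,t). (N div f)*t^a) ` ({1..L^2} \<times> {1..L})"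
  define B where "B = (\<lambda>(e,t). e*t^a) ` ({1..N div L^2} \<times> {1..L})"
  define C where "C = (\<lambda>(t,e). e*t^a) ` (SIGMA t:{Suc L..N}. {1..N div t^2})"
  have sub: "S a N \<subseteq> A \<union> B \<union> C"
  proof
    fix n assume "n \<in> S a N"
    then obtain f t where n: "n \<in> {1..N}" and f: "f dvd N" "f \<ge> 1" and t: "t \<ge> 1" "t^2 \<le> f"
      and nf: "n = (N div f) * t^a" unfolding S_def by blast
    have N0: "N > 0" using n by simp
    have fN: "f \<le> N" using f N0 by (simp add: dvd_imp_le)
    show "n \<in> A \<union> B \<union> C"
    proof (cases "f \<le> L^2")
      case True
      hence "t^2 \<le> L^2" using t by linarith
      hence "t \<le> L" by (simp add: power_mono_iff)
      hence "n \<in> A" unfolding A_def nf using True t f by auto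
      thus ?thesis by simp
    next
      case False
      define e where "e = N div f"
      have Nef: "N = e * f" using f by (simp add: e_def)
      have e1: "e \<ge> 1" using Nef N0 by (cases "e = 0") auto
      have ne: "n = e * t^a" using nf e_def by simp
      show ?thesis
      proof (cases "t \<le> L")
        case True
        have "e * L^2 \<le> N" using False Nef by simp
        hence "e \<le> N div L^2" using L1 by (simp add: less_eq_div_iff_mult_less_eq)
        hence "n \<in> B" unfolding B_def ne using e1 t True by auto
        thus ?thesis by simp
      next
        case tL: False
        have "e * t^2 \<le> N" using t Nef by simp
        hence "e \<le> N div t^2" using t by (simp add: less_eq_div_iff_mult_less_eq)
        moreover have "t \<le> N"
        proof -
          have "t \<le> t^2" using t by (simp add: power2_eq_square)
          thus ?thesis using t fN by linarith
        qed
        ultimately have "(t, e) \<in> (SIGMA t:{Suc L..N}. {1..N div t^2})" using e1 tL by auto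
        hence "n \<in> C" unfolding C_def ne by (rule rev_image_eqI) simp
        thus ?thesis by simp
      qed
    qed
  qed
  have cA: "card A \<le> L^2 * L" unfolding A_def
    by (rule order.trans[OF card_image_le]) auto
  have cB: "card B \<le> (N div L^2) * L" unfolding B_def
    by (rule order.trans[OF card_image_le]) auto
  have cC: "card C \<le> (\<Sum>t\<in>{Suc L..N}. N div t^2)" unfolding C_def
    by (rule order.trans[OF card_image_le]) (auto simp: card_SigmaI)
  have "card (S a N) \<le> card (A \<union> B \<union> C)"
    by (rule card_mono[OF _ sub]) (auto simp: A_def B_def C_def)
  also have "\<dots> \<le> card A + card B + card C"
    by (meson card_Un_le add_le_mono order.trans le_refl)
  finally have c: "real (card (S a N)) \<le> real (card A) + real (card B) + real (card C)"
    by linarith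
  have rA: "real (card A) \<le> real L ^ 3"
  proof -
    have "real (card A) \<le> real (L^2 * L)" using cA by linarith
    thus ?thesis by (simp add: power2_eq_square power3_eq_cube)
  qed
  have rB: "real (card B) \<le> real N / real L"
  proof -
    have "real (card B) \<le> real (N div L^2) * real L" using cB by (metis of_nat_le_iff of_nat_mult)
    also have "\<dots> \<le> real N / real (L^2) * real L"
      by (intro mult_right_mono of_nat_div_le_of_nat) auto
    also have "\<dots> = real N / real L" using L1 by (simp add: power2_eq_square field_simps)
    finally show ?thesis .
  qed
  have rC: "real (card C) \<le> real N / real L"
  proof -
    have "real (card C) \<le> (\<Sum>t\<in>{Suc L..N}. real (N div t^2))"
      using cC by (metis of_nat_le_iff of_nat_sum)
    also have "\<dots> \<le> (\<Sum>t\<in>{Suc L..N}. real N * (1 / (real t * (real t - 1))))"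
    proof (rule sum_mono)
      fix t assume "t \<in> {Suc L..N}"
      hence t2: "real t \<ge> 2" using L1 by auto
      have "real (N div t^2) \<le> real N / real (t^2)" by (rule of_nat_div_le_of_nat)
      also have "\<dots> \<le> real N / (real t * (real t - 1))"
        using t2 by (intro divide_left_mono) (auto simp: power2_eq_square)
      finally show "real (N div t^2) \<le> real N * (1 / (real t * (real t - 1)))" by simp
    qed
    also have "\<dots> = real N * (\<Sum>t\<in>{Suc L..N}. 1 / (real t * (real t - 1)))"
      by (simp add: sum_distrib_left)
    also have "\<dots> \<le> real N / real L"
    proof (cases "L \<le> N")
      case True
      have "real N * (\<Sum>t\<in>{Suc L..N}. 1 / (real t * (real t - 1))) = real N * (1 / real L - 1 / real N)"
        using telescope[OF L1 True] by simp
      also have "\<dots> \<le> real N * (1 / real L)" by (intro mult_left_mono) auto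
      finally show ?thesis by simp
    next
      case False
      thus ?thesis by simp
    qed
    finally show ?thesis .
  qed
  show ?thesis using c rA rB rC by linarith
qed

theorem mainTheorem6:
  fixes a b :: nat and \<alpha> :: "nat \<Rightarrow> int"
  assumes "b \<ge> 1" and "a > b" and "coprime a b" and "\<bar>\<alpha> b\<bar> = 1"
  shows "\<forall>\<delta>::real. \<delta> > 0 \<longrightarrow>
           (\<exists>N\<^sub>\<delta>::nat. \<exists>\<Gamma> :: nat \<Rightarrow> nat set.
              \<forall>N::nat. N > N\<^sub>\<delta> \<longrightarrow>
                 \<Gamma> N \<subseteq> {1..N} \<and> real (card (\<Gamma> N)) \<le> \<delta> * real N \<and>
                 (\<forall>n \<in> {1..N} - \<Gamma> N. \<not> (\<exists>m::int. m > 0 \<and>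
                     m ^ a = (\<Sum>j=b..a. \<alpha> j * int n ^ j * int N ^ (a - j)))))"
proof (intro allI impI)
  fix \<delta> :: real assume d: "\<delta> > 0"
  define L :: nat where "L = nat \<lceil>4 / \<delta>\<rceil> + 1"
  have L1: "L \<ge> 1" by (simp add: L_def)
  have L4: "real L \<ge> 4 / \<delta>" unfolding L_def by linarith
  define N0 :: nat where "N0 = nat \<lceil>2 * real L ^ 3 / \<delta>\<rceil>"
  show "\<exists>N\<^sub>\<delta>::nat. \<exists>\<Gamma> :: nat \<Rightarrow> nat set.
              \<forall>N::nat. N > N\<^sub>\<delta> \<longrightarrow>
                 \<Gamma> N \<subseteq> {1..N} \<and> real (card (\<Gamma> N)) \<le> \<delta> * real N \<and>
                 (\<forall>n \<in> {1..N} - \<Gamma> N. \<not> (\<exists>m::int. m > 0 \<and>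
                     m ^ a = (\<Sum>j=b..a. \<alpha> j * int n ^ j * int N ^ (a - j))))"
  proof (intro exI allI impI conjI)
    fix N :: nat assume NN: "N0 < N"
    show "S a N \<subseteq> {1..N}" unfolding S_def by auto
    have "real N > 2 * real L ^ 3 / \<delta>" using NN unfolding N0_def by linarith
    hence h1: "real L ^ 3 \<le> \<delta> * real N / 2" using d by (simp add: field_simps)
    have "2 * real N / real L \<le> \<delta> * real N / 2"
    proof -
      have "4 \<le> \<delta> * real L" using L4 d by (simp add: field_simps)
      hence "2 * real N * 2 \<le> \<delta> * real N * real L" by (metis mult.commute mult.left_commute mult_right_mono of_nat_0_le_iff mult.assoc order_refl dual_order.trans mult_le_cancel_right1 numeral_Bit0 mult_2 ) 
      thus ?thesis using L1 by (simp add: field_simps)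
    qed
    with h1 count[OF L1, of a N] show "real (card (S a N)) \<le> \<delta> * real N" by linarith
    show "\<forall>n \<in> {1..N} - S a N. \<not> (\<exists>m::int. m > 0 \<and>
                     m ^ a = (\<Sum>j=b..a. \<alpha> j * int n ^ j * int N ^ (a - j)))"
    proof (intro ballI notI)
      fix n assume n: "n \<in> {1..N} - S a N"
        and "\<exists>m::int. m > 0 \<and> m ^ a = (\<Sum>j=b..a. \<alpha> j * int n ^ j * int N ^ (a - j))"
      then obtain m :: int where m: "m > 0" "m ^ a = (\<Sum>j=b..a. \<alpha> j * int n ^ j * int N ^ (a - j))" by blast
      from key[where a=a and b=b and \<alpha>=\<alpha>, OF assms, of n N m] n m have "\<exists>f t. f dvd N \<and> f \<ge> 1 \<and> t \<ge> 1 \<and> t^2 \<le> f \<and> n = (N div f) * t^a"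
        by auto
      hence "n \<in> S a N" using n unfolding S_def by auto
      thus False using n by simp
    qed
  qed
qed

end
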